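(* For a tempered distribution $\psi\in\mathcal S'(\mathbb R^d)$ the following are equivalent: (i) $\psi$ is translation bounded on $\mathcal S$, i.e. $\psi*f$ is bounded for every $f\in\mathcal S$; (ii) for all $f\in\mathcal S$, $\psi*f$ is bounded and uniformly continuous; (iii) there exist $M,N\in\mathbb Z_+$ and $C>0$ such that $\|\psi*f\|_\infty\le C\|f\|_{M,N}$ for all $f\in\mathcal S$; (iv) the functionals $\{T_t\psi:t\in\mathbb R^d\}$ are equicontinuous on $\mathcal S$.
   Context: $\psi*f(t):=\psi(T_tf_-)$, $f_-(s)=f(-s)$, $T_tf(x)=f(x-t)$, and $T_t\psi(f)=\psi(T_{-t}f)$. For $M,N\in\mathbb Z_+$, $\|f\|_{M,N}=\sup_{|\alpha|\le M,|\beta|\le N}\sup_{x\in\mathbb R^d}|x^\alpha D^\beta f(x)|$. *)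

theory Defs
  imports "HOL-Analysis.Analysis"
begin

text \<open>Points of R^d are vectors of type real^'d (the dimension d = CARD('d) is arbitrary
 but fixed); test functions are complex valued.\<close>

type_synonym 'd testfun = "real^'d \<Rightarrow> complex"

definition partial :: "'d::finite \<Rightarrow> 'd testfun \<Rightarrow> 'd testfun" where
  "partial i f = (\<lambda>x. vector_derivative (\<lambda>t::real. f (x + t *\<^sub>R axis i 1)) (at 0))"

fun Dl :: "'d::finite list \<Rightarrow> 'd testfun \<Rightarrow> 'd testfun" where
  "Dl [] f = f"
| "Dl (i # is) f = partial i (Dl is f)"

definition monom :: "('d::finite \<Rightarrow> nat) \<Rightarrow> real^'d \<Rightarrow> real" where
  "monom \<alpha> x = (\<Prod>i\<in>UNIV. (x $ i) ^ \<alpha> i)"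

definition schwartz :: "'d::finite testfun set" where
  "schwartz = {f. (\<forall>is x. Dl is f differentiable (at x)) \<and>
      (\<forall>\<alpha> is. bounded (range (\<lambda>x. complex_of_real (monom \<alpha> x) * Dl is f x)))}"

text \<open>The seminorm ||f||_{M,N} = sup_{|alpha|<=M, |beta|<=N} sup_x |x^alpha D^beta f(x)|
 (derivatives of order <= N are indexed by direction lists of length <= N).\<close>
definition normMN :: "nat \<Rightarrow> nat \<Rightarrow> 'd::finite testfun \<Rightarrow> real" where
  "normMN M N f = Sup {norm (complex_of_real (monom \<alpha> x) * Dl is f x) | \<alpha> is x.
       sum \<alpha> UNIV \<le> M \<and> length is \<le> N}"

text \<open>Basic neighbourhoods of g in the Schwartz topology (generated by the seminorms).\<close>
definition sball :: "'d::finite testfun \<Rightarrow> nat \<Rightarrow> nat \<Rightarrow> real \<Rightarrow> 'd testfun set" where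
  "sball g M N \<delta> = {f \<in> schwartz. normMN M N (f - g) < \<delta>}"

definition tempered :: "('d::finite testfun \<Rightarrow> complex) \<Rightarrow> bool" where
  "tempered \<psi> \<longleftrightarrow>
     (\<forall>f\<in>schwartz. \<forall>g\<in>schwartz. \<forall>a b::complex.
         \<psi> (\<lambda>x. a * f x + b * g x) = a * \<psi> f + b * \<psi> g) \<and>
     (\<forall>g\<in>schwartz. \<forall>\<epsilon>>0. \<exists>M N \<delta>. \<delta> > 0 \<and>
         (\<forall>f\<in>sball g M N \<delta>. norm (\<psi> f - \<psi> g) < \<epsilon>))"

definition transl :: "real^'d \<Rightarrow> 'd::finite testfun \<Rightarrow> 'd testfun" where
  "transl t f = (\<lambda>x. f (x - t))"

definition reflect :: "'d::finite testfun \<Rightarrow> 'd testfun" where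
  "reflect f = (\<lambda>s. f (- s))"

definition transl_distr :: "real^'d \<Rightarrow> ('d::finite testfun \<Rightarrow> complex) \<Rightarrow> ('d testfun \<Rightarrow> complex)" where
  "transl_distr t \<psi> = (\<lambda>f. \<psi> (transl (- t) f))"

definition dconv :: "('d::finite testfun \<Rightarrow> complex) \<Rightarrow> 'd testfun \<Rightarrow> real^'d \<Rightarrow> complex" where
  "dconv \<psi> f t = \<psi> (transl t (reflect f))"

definition equicont_S :: "('i \<Rightarrow> ('d::finite testfun \<Rightarrow> complex)) \<Rightarrow> 'i set \<Rightarrow> bool" where
  "equicont_S \<Phi> I \<longleftrightarrow> (\<forall>g\<in>schwartz. \<forall>\<epsilon>>0. \<exists>M N \<delta>. \<delta> > 0 \<and>
       (\<forall>i\<in>I. \<forall>f\<in>sball g M N \<delta>. norm (\<Phi> i f - \<Phi> i g) < \<epsilon>))"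

end

theory Submission
  imports Defs
begin


lemma basis_exp_R: "(\<Sum>i\<in>UNIV. (x::real^'d::finite) $ i *\<^sub>R axis i 1) = x"
  using basis_expansion[of x] by (simp add: scalar_mult_eq_scaleR)

lemma partial_from_deriv:
  assumes "(h has_derivative D) (at x)"
  shows "partial i h x = D (axis i 1)"
proof -
  let ?e = "axis i (1::real)"
  have l: "linear D" using assms has_derivative_linear by blast
  have d1: "((\<lambda>t::real. x + t *\<^sub>R ?e) has_derivative (\<lambda>t. t *\<^sub>R ?e)) (at 0)"
    by (auto intro!: derivative_eq_intros)
  have d2: "(h has_derivative D) (at (x + 0 *\<^sub>R ?e))" using assms by simp
  have "((\<lambda>t. h (x + t *\<^sub>R ?e)) has_derivative (\<lambda>t. D (t *\<^sub>R ?e))) (at 0)"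
    using has_derivative_compose[OF d1 d2] by (simp add: o_def)
  hence "((\<lambda>t. h (x + t *\<^sub>R ?e)) has_vector_derivative D ?e) (at 0)"
    unfolding has_vector_derivative_def using linear_scale[OF l] by simp
  thus ?thesis unfolding partial_def by (rule vector_derivative_at)
qed

lemma deriv_partials:
  fixes h :: "'d::finite testfun"
  assumes "h differentiable (at x)"
  shows "(h has_derivative (\<lambda>v. \<Sum>i\<in>UNIV. of_real (v $ i) * partial i h x)) (at x)"
proof -
  obtain D where D: "(h has_derivative D) (at x)" using assms differentiable_def by blast
  have l: "linear D" using D has_derivative_linear by blast
  have "D v = (\<Sum>i\<in>UNIV. of_real (v $ i) * partial i h x)" for v
  proof -
    have "D v = D (\<Sum>i\<in>UNIV. v $ i *\<^sub>R axis i 1)" by (simp add: basis_exp_R)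
    also have "\<dots> = (\<Sum>i\<in>UNIV. v $ i *\<^sub>R D (axis i 1))"
      by (simp add: linear_sum[OF l] linear_scale[OF l])
    also have "\<dots> = (\<Sum>i\<in>UNIV. of_real (v $ i) * partial i h x)"
      by (simp add: partial_from_deriv[OF D] scaleR_conv_of_real)
    finally show ?thesis .
  qed
  hence "D = (\<lambda>v. \<Sum>i\<in>UNIV. of_real (v $ i) * partial i h x)" by blast
  thus ?thesis using D by simp
qed

lemma sum_axis: "(\<Sum>j\<in>UNIV. of_real (axis i (1::real) $ j) * c j) = (c i :: complex)"
proof -
  have "\<And>j. of_real (axis i (1::real) $ j) * c j = (if i = j then c j else 0)" by (auto simp: axis_def)
  thus ?thesis by simp
qed

lemma partial_lin:
  fixes f g :: "'d::finite testfun"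
  assumes "f differentiable (at x)" "g differentiable (at x)"
  shows "partial i (\<lambda>y. a * f y + b * g y) x = a * partial i f x + b * partial i g x"
proof -
  have "((\<lambda>y. a * f y + b * g y) has_derivative
     (\<lambda>v. a * (\<Sum>i\<in>UNIV. of_real (v $ i) * partial i f x) + b * (\<Sum>i\<in>UNIV. of_real (v $ i) * partial i g x))) (at x)"
    using deriv_partials[OF assms(1)] deriv_partials[OF assms(2)]
    by (auto intro!: derivative_eq_intros)
  from partial_from_deriv[OF this, of i]
  show ?thesis by (simp add: sum_axis)
qed

lemma partial_transl: "partial i (transl t f) = transl t (partial i f)"
  unfolding partial_def transl_def by (rule ext) (simp add: algebra_simps)

lemma Dl_transl: "Dl is (transl t f) = transl t (Dl is f)"
  by (induction "is") (auto simp: partial_transl)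

lemma transl_diff_iff: "transl t f differentiable (at x) \<longleftrightarrow> f differentiable (at (x - t))"
proof
  assume "transl t f differentiable (at x)"
  hence "(transl t f \<circ> (\<lambda>y. y + t)) differentiable (at (x - t))"
    by (intro differentiable_chain_at) (auto intro!: derivative_intros)
  thus "f differentiable (at (x - t))" by (simp add: o_def transl_def)
next
  assume "f differentiable (at (x - t))"
  hence "(f \<circ> (\<lambda>y. y - t)) differentiable (at x)"
    by (intro differentiable_chain_at) (auto intro!: derivative_intros)
  thus "transl t f differentiable (at x)" by (simp add: o_def transl_def)
qed




lemma abs_monom_le: "\<bar>monom \<alpha> z\<bar> \<le> (1 + norm z) ^ sum \<alpha> UNIV"
proof -
  have "\<bar>monom \<alpha> z\<bar> = (\<Prod>i\<in>UNIV. \<bar>z $ i\<bar> ^ \<alpha> i)" by (simp add: monom_def abs_prod power_abs)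
  also have "\<dots> \<le> (\<Prod>i\<in>UNIV. (1 + norm z) ^ \<alpha> i)"
    by (intro prod_mono conjI power_mono) (auto intro: order_trans[OF component_le_norm_cart])
  also have "\<dots> = (1 + norm z) ^ sum \<alpha> UNIV" by (simp add: power_sum)
  finally show ?thesis .
qed

lemma one_plus_pow: "(0::real) \<le> a \<Longrightarrow> (1 + a) ^ m \<le> 2 ^ m * (1 + a ^ m)"
proof -
  assume a: "0 \<le> a"
  have "(1 + a) ^ m \<le> (2 * max 1 a) ^ m" by (intro power_mono) (use a in auto)
  also have "\<dots> = 2 ^ m * max 1 a ^ m" by (simp add: power_mult_distrib)
  also have "max 1 a ^ m \<le> 1 + a ^ m"
    by (cases "a \<le> 1") (auto simp: max_def a)
  hence "2 ^ m * max 1 a ^ m \<le> 2 ^ m * (1 + a ^ m)" by simp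
  finally show ?thesis .
qed

definition ecoord :: "'d::finite \<Rightarrow> nat \<Rightarrow> 'd \<Rightarrow> nat" where
  "ecoord j m = (\<lambda>k. if k = j then m else 0)"

lemma monom_ecoord: "monom (ecoord j m) y = (y $ j) ^ m"
  unfolding monom_def ecoord_def
  by (simp add: if_distrib[of "\<lambda>e. _ ^ e"] prod.If_cases)

lemma sum_ecoord: "sum (ecoord j m) UNIV = m"
  unfolding ecoord_def by (subst sum.delta) auto

lemma norm_pow_coord:
  fixes y :: "real^'d::finite"
  obtains j where "norm y ^ m \<le> real CARD('d) ^ m * \<bar>y $ j\<bar> ^ m"
proof -
  obtain j where j: "\<forall>i. \<bar>y $ i\<bar> \<le> \<bar>y $ j\<bar>"
  proof -
    have "finite (range (\<lambda>i. \<bar>y $ i\<bar>))" by simp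
    hence "Max (range (\<lambda>i. \<bar>y $ i\<bar>)) \<in> range (\<lambda>i. \<bar>y $ i\<bar>)" by (intro Max_in) auto
    then obtain j where "Max (range (\<lambda>i. \<bar>y $ i\<bar>)) = \<bar>y $ j\<bar>" by (elim imageE) blast
    moreover have "\<forall>i. \<bar>y $ i\<bar> \<le> Max (range (\<lambda>i. \<bar>y $ i\<bar>))" by simp
    ultimately show ?thesis using that by metis
  qed
  have "norm y \<le> (\<Sum>i\<in>UNIV. \<bar>y $ i\<bar>)" by (rule norm_le_l1_cart)
  also have "\<dots> \<le> (\<Sum>i\<in>(UNIV::'d set). \<bar>y $ j\<bar>)" by (intro sum_mono) (use j in auto)
  also have "\<dots> = real CARD('d) * \<bar>y $ j\<bar>" by simp
  finally have "norm y ^ m \<le> (real CARD('d) * \<bar>y $ j\<bar>) ^ m" by (intro power_mono) auto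
  thus ?thesis using that by (simp add: power_mult_distrib)
qed

lemma shift_bound:
  fixes g :: "'d::finite testfun"
  assumes A0: "\<And>y. norm (g y) \<le> A"
    and Aj: "\<And>j y. norm (of_real (monom (ecoord j m) y) * g y) \<le> A"
    and am: "sum \<alpha> UNIV \<le> m"
  shows "norm (of_real (monom \<alpha> (y + t)) * g y) \<le> (1 + norm t) ^ m * 2 ^ m * (1 + real CARD('d) ^ m) * A"
proof -
  have A: "0 \<le> A" using A0[of y] norm_ge_zero[of "g y"] by linarith
  have "\<bar>monom \<alpha> (y + t)\<bar> \<le> (1 + norm (y + t)) ^ sum \<alpha> UNIV" by (rule abs_monom_le)
  also have "\<dots> \<le> (1 + norm (y + t)) ^ m" by (intro power_increasing am) auto
  also have "\<dots> \<le> ((1 + norm t) * (1 + norm y)) ^ m"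
  proof (intro power_mono)
    have "norm (y + t) \<le> norm y + norm t" by (rule norm_triangle_ineq)
    moreover have "0 \<le> norm t * norm y" by simp
    moreover have "(1 + norm t) * (1 + norm y) = 1 + norm t + norm y + norm t * norm y" by (simp add: algebra_simps)
    ultimately show "1 + norm (y + t) \<le> (1 + norm t) * (1 + norm y)" by linarith
  qed simp
  also have "\<dots> = (1 + norm t) ^ m * (1 + norm y) ^ m" by (simp add: power_mult_distrib)
  also have "\<dots> \<le> (1 + norm t) ^ m * (2 ^ m * (1 + norm y ^ m))"
    by (intro mult_left_mono one_plus_pow) auto
  finally have m1: "\<bar>monom \<alpha> (y + t)\<bar> \<le> (1 + norm t) ^ m * (2 ^ m * (1 + norm y ^ m))" .
  obtain j where j: "norm y ^ m \<le> real CARD('d) ^ m * \<bar>y $ j\<bar> ^ m" by (rule norm_pow_coord)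
  have "norm y ^ m * norm (g y) \<le> real CARD('d) ^ m * (\<bar>y $ j\<bar> ^ m * norm (g y))"
    using mult_right_mono[OF j, of "norm (g y)"] by (simp add: mult.assoc)
  also have "\<bar>y $ j\<bar> ^ m * norm (g y) \<le> A"
    using Aj[of j y] by (simp add: monom_ecoord norm_mult norm_power)
  hence "real CARD('d) ^ m * (\<bar>y $ j\<bar> ^ m * norm (g y)) \<le> real CARD('d) ^ m * A"
    by (intro mult_left_mono) auto
  finally have m2: "norm y ^ m * norm (g y) \<le> real CARD('d) ^ m * A" .
  have "norm (of_real (monom \<alpha> (y + t)) * g y) = \<bar>monom \<alpha> (y + t)\<bar> * norm (g y)"
    by (simp add: norm_mult)
  also have "\<dots> \<le> (1 + norm t) ^ m * (2 ^ m * (1 + norm y ^ m)) * norm (g y)"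
    by (intro mult_right_mono m1) auto
  also have "\<dots> = (1 + norm t) ^ m * 2 ^ m * (norm (g y) + norm y ^ m * norm (g y))"
    by (simp add: algebra_simps)
  also have "\<dots> \<le> (1 + norm t) ^ m * 2 ^ m * (A + real CARD('d) ^ m * A)"
    by (intro mult_left_mono add_mono A0 m2) auto
  finally show ?thesis by (simp add: algebra_simps)
qed




definition smooth :: "'d::finite testfun \<Rightarrow> bool" where
  "smooth f \<longleftrightarrow> (\<forall>is x. Dl is f differentiable (at x))"

lemma schwartz_iff: "f \<in> schwartz \<longleftrightarrow> smooth f \<and>
   (\<forall>\<alpha> is. bounded (range (\<lambda>x. complex_of_real (monom \<alpha> x) * Dl is f x)))"
  unfolding schwartz_def smooth_def by simp

lemma Dl_lin:
  assumes "smooth f" "smooth g"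
  shows "Dl is (\<lambda>y. a * f y + b * g y) = (\<lambda>y. a * Dl is f y + b * Dl is g y)"
proof (induction "is")
  case Nil then show ?case by simp
next
  case (Cons i "is")
  have "Dl (i # is) (\<lambda>y. a * f y + b * g y) = partial i (\<lambda>y. a * Dl is f y + b * Dl is g y)"
    using Cons by simp
  also have "\<dots> = (\<lambda>y. a * Dl (i # is) f y + b * Dl (i # is) g y)"
    using assms unfolding smooth_def by (auto intro!: ext partial_lin)
  finally show ?case .
qed

lemma smooth_lin:
  assumes "smooth f" "smooth g"
  shows "smooth (\<lambda>y. a * f y + b * g y)"
  unfolding smooth_def Dl_lin[OF assms]
  using assms unfolding smooth_def
  by (auto intro!: differentiable_compose[of "\<lambda>z. z"] derivative_intros)

lemma bounded_range_iff: "bounded (range h) \<longleftrightarrow> (\<exists>B. \<forall>x. norm (h x) \<le> B)"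
  by (auto simp: bounded_iff)

lemma schwartz_lin:
  assumes "f \<in> schwartz" "g \<in> schwartz"
  shows "(\<lambda>y. a * f y + b * g y) \<in> schwartz"
proof -
  have sf: "smooth f" and sg: "smooth g" using assms schwartz_iff by blast+
  have "bounded (range (\<lambda>x. complex_of_real (monom \<alpha> x) * Dl is (\<lambda>y. a * f y + b * g y) x))" for \<alpha> "is"
  proof -
    obtain Bf where Bf: "\<And>x. norm (complex_of_real (monom \<alpha> x) * Dl is f x) \<le> Bf"
      using assms(1) unfolding schwartz_iff bounded_range_iff by blast
    obtain Bg where Bg: "\<And>x. norm (complex_of_real (monom \<alpha> x) * Dl is g x) \<le> Bg"
      using assms(2) unfolding schwartz_iff bounded_range_iff by blast
    have "norm (complex_of_real (monom \<alpha> x) * Dl is (\<lambda>y. a * f y + b * g y) x) \<le> norm a * Bf + norm b * Bg" for x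
    proof -
      have "complex_of_real (monom \<alpha> x) * Dl is (\<lambda>y. a * f y + b * g y) x
          = a * (complex_of_real (monom \<alpha> x) * Dl is f x) + b * (complex_of_real (monom \<alpha> x) * Dl is g x)"
        by (simp add: Dl_lin[OF sf sg] algebra_simps)
      also have "norm \<dots> \<le> norm a * norm (complex_of_real (monom \<alpha> x) * Dl is f x) + norm b * norm (complex_of_real (monom \<alpha> x) * Dl is g x)"
        by (metis norm_mult norm_triangle_ineq)
      also have "\<dots> \<le> norm a * Bf + norm b * Bg"
        by (intro add_mono mult_left_mono Bf Bg) auto
      finally show ?thesis .
    qed
    thus ?thesis unfolding bounded_range_iff by blast
  qed
  thus ?thesis using smooth_lin[OF sf sg] unfolding schwartz_iff by blast
qed

lemma schwartz_diff: "f \<in> schwartz \<Longrightarrow> g \<in> schwartz \<Longrightarrow> (\<lambda>y. f y - g y) \<in> schwartz"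
  using schwartz_lin[of f g 1 "-1"] by simp

lemma schwartz_add: "f \<in> schwartz \<Longrightarrow> g \<in> schwartz \<Longrightarrow> (\<lambda>y. f y + g y) \<in> schwartz"
  using schwartz_lin[of f g 1 1] by simp

lemma schwartz_scale: "f \<in> schwartz \<Longrightarrow> (\<lambda>y. c * f y) \<in> schwartz"
  using schwartz_lin[of f f c 0] by simp

lemma Dl_diff: "smooth f \<Longrightarrow> smooth g \<Longrightarrow> Dl is (\<lambda>y. f y - g y) = (\<lambda>y. Dl is f y - Dl is g y)"
  using Dl_lin[of f g "is" 1 "-1"] by simp

lemma Dl_scale: "smooth f \<Longrightarrow> Dl is (\<lambda>y. c * f y) = (\<lambda>y. c * Dl is f y)"
  using Dl_lin[of f f "is" c 0] by simp

lemma Dl_zero: "Dl is (\<lambda>_. 0) = (\<lambda>_. 0)"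
proof (induction "is")
  case (Cons i "is")
  have "partial i (\<lambda>_. 0) = (\<lambda>_. 0)"
    unfolding partial_def by (auto intro!: ext vector_derivative_at)
  with Cons show ?case by simp
qed simp

lemma schwartz_zero: "(\<lambda>_. 0) \<in> schwartz"
  unfolding schwartz_def by (simp add: Dl_zero)

lemma Dl_sum:
  fixes n :: nat
  assumes "\<And>k. smooth (f k)"
  shows "Dl is (\<lambda>x. \<Sum>k<n. f k x) = (\<lambda>x. \<Sum>k<n. Dl is (f k) x) \<and> smooth (\<lambda>x. \<Sum>k<n. f k x)"
proof (induction n)
  case 0
  show ?case using Dl_zero[of "is"] by (auto simp: smooth_def Dl_zero)
next
  case (Suc n)
  have e: "(\<lambda>x. \<Sum>k<Suc n. f k x) = (\<lambda>x. 1 * (\<Sum>k<n. f k x) + 1 * f n x)" by simp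
  show ?case unfolding e using Dl_lin[of "\<lambda>x. \<Sum>k<n. f k x" "f n" "is" 1 1]
      smooth_lin[of "\<lambda>x. \<Sum>k<n. f k x" "f n" 1 1] Suc assms by simp
qed

lemma schwartz_sum: fixes n :: nat shows "(\<And>k. f k \<in> schwartz) \<Longrightarrow> (\<lambda>x. \<Sum>k<n. f k x) \<in> schwartz"
proof (induction n)
  case 0 then show ?case using schwartz_zero by simp
next
  case (Suc n) then show ?case using schwartz_add[of "\<lambda>x. \<Sum>k<n. f k x" "f n"] by simp
qed




lemma finite_idx: "finite {(\<alpha>::'d::finite \<Rightarrow> nat, is::'d list). sum \<alpha> UNIV \<le> M \<and> length is \<le> N}"
proof -
  have f1: "finite (Pi\<^sub>E (UNIV::'d set) (\<lambda>_. {..M}))" by (intro finite_PiE) auto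
  have f2: "finite {is::'d list. set is \<subseteq> UNIV \<and> length is \<le> N}" by (intro finite_lists_length_le) auto
  have "{(\<alpha>::'d::finite \<Rightarrow> nat, is::'d list). sum \<alpha> UNIV \<le> M \<and> length is \<le> N}
     \<subseteq> Pi\<^sub>E (UNIV::'d set) (\<lambda>_. {..M}) \<times> {is::'d list. set is \<subseteq> UNIV \<and> length is \<le> N}"
  proof clarsimp
    fix \<alpha> :: "'d \<Rightarrow> nat" and "is" :: "'d list"
    assume "sum \<alpha> UNIV \<le> M"
    moreover have "\<And>i. \<alpha> i \<le> sum \<alpha> UNIV" by (rule member_le_sum) auto
    ultimately show "\<alpha> \<in> Pi\<^sub>E UNIV (\<lambda>_. {..M})" by (auto simp: PiE_UNIV_domain intro: order_trans)
  qed
  thus ?thesis using finite_subset f1 f2 by blast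
qed

definition NSet :: "nat \<Rightarrow> nat \<Rightarrow> 'd::finite testfun \<Rightarrow> real set" where
  "NSet M N f = {norm (complex_of_real (monom \<alpha> x) * Dl is f x) | \<alpha> is x.
       sum \<alpha> UNIV \<le> M \<and> length is \<le> N}"

lemma normMN_NSet: "normMN M N f = Sup (NSet M N f)"
  unfolding normMN_def NSet_def by simp

lemma NSet_bdd:
  fixes f :: "'d::finite testfun"
  assumes "f \<in> schwartz" shows "bdd_above (NSet M N f)"
proof -
  let ?P = "{(\<alpha>::'d::finite \<Rightarrow> nat, is::'d list). sum \<alpha> UNIV \<le> M \<and> length is \<le> N}"
  have "\<forall>p. \<exists>B. \<forall>x. norm (complex_of_real (monom (fst p) x) * Dl (snd p) f x) \<le> B"
    using assms unfolding schwartz_iff bounded_range_iff by blast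
  then obtain B where B: "\<And>p x. norm (complex_of_real (monom (fst p) x) * Dl (snd p) f x) \<le> B p"
    by metis
  have "z \<le> (\<Sum>p\<in>?P. \<bar>B p\<bar>)" if zin: "z \<in> NSet M N f" for z
  proof -
    obtain \<alpha> "is" x where z: "z = norm (complex_of_real (monom \<alpha> x) * Dl is f x)"
      and p1: "sum \<alpha> UNIV \<le> M" and p2: "length is \<le> N" using zin unfolding NSet_def by blast
    have p: "(\<alpha>, is) \<in> ?P" using p1 p2 by simp
    have "z \<le> \<bar>B (\<alpha>, is)\<bar>" using B[of "(\<alpha>, is)" x] z by simp
    also have "\<dots> \<le> (\<Sum>p\<in>?P. \<bar>B p\<bar>)"
      by (rule member_le_sum[OF p _ finite_idx]) auto
    finally show ?thesis .
  qed
  thus ?thesis unfolding bdd_above_def by blast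
qed

lemma normMN_ge:
  assumes "f \<in> schwartz" "sum \<alpha> UNIV \<le> M" "length is \<le> N"
  shows "norm (complex_of_real (monom \<alpha> x) * Dl is f x) \<le> normMN M N f"
  unfolding normMN_NSet by (rule cSup_upper[OF _ NSet_bdd[OF assms(1)]]) (use assms in \<open>auto simp: NSet_def\<close>)

lemma normMN_le:
  assumes "\<And>\<alpha> is x. sum \<alpha> UNIV \<le> M \<Longrightarrow> length is \<le> N \<Longrightarrow>
             norm (complex_of_real (monom \<alpha> x) * Dl is f x) \<le> B"
  shows "normMN M N f \<le> B"
  unfolding normMN_NSet
proof (rule cSup_least)
  show "NSet M N f \<noteq> {}" unfolding NSet_def
    by (auto intro!: exI[of _ "\<lambda>_. 0"] exI[of _ "[]"])
qed (use assms in \<open>auto simp: NSet_def\<close>)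

lemma monom_zero: "monom (\<lambda>_. 0) x = 1" by (simp add: monom_def)

lemma norm_le_normMN: "f \<in> schwartz \<Longrightarrow> norm (f x) \<le> normMN M N f"
  using normMN_ge[of f "\<lambda>_. 0" M "[]" N x] by (simp add: monom_zero)

lemma normMN_nonneg: "f \<in> schwartz \<Longrightarrow> 0 \<le> normMN M N f"
  using norm_le_normMN[of f 0 M N] norm_ge_zero[of "f 0"] by linarith

lemma normMN_mono:
  assumes "f \<in> schwartz" "M \<le> M'" "N \<le> N'"
  shows "normMN M N f \<le> normMN M' N' f"
  by (rule normMN_le, rule normMN_ge) (use assms in auto)

lemma normMN_scale_le:
  fixes f :: "'d::finite testfun"
  assumes "f \<in> schwartz"
  shows "normMN M N (\<lambda>y. c * f y) \<le> norm c * normMN M N f"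
proof (rule normMN_le)
  fix \<alpha> :: "'d \<Rightarrow> nat" and "is" :: "'d list" and x assume a: "sum \<alpha> UNIV \<le> M" "length is \<le> N"
  have sf: "smooth f" using assms schwartz_iff by blast
  have "norm (complex_of_real (monom \<alpha> x) * Dl is (\<lambda>y. c * f y) x)
      = norm c * norm (complex_of_real (monom \<alpha> x) * Dl is f x)"
    by (simp add: Dl_scale[OF sf] norm_mult)
  also have "\<dots> \<le> norm c * normMN M N f"
    by (intro mult_left_mono normMN_ge assms a) auto
  finally show "norm (complex_of_real (monom \<alpha> x) * Dl is (\<lambda>y. c * f y) x) \<le> norm c * normMN M N f" .
qed

lemma normMN_scale:
  assumes "f \<in> schwartz"
  shows "normMN M N (\<lambda>y. c * f y) = norm c * normMN M N f"
proof (cases "c = 0")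
  case True
  have "normMN M N (\<lambda>y. c * f y) \<le> 0" using normMN_scale_le[OF assms, of M N c] True by simp
  moreover have "0 \<le> normMN M N (\<lambda>y. c * f y)" using True schwartz_zero normMN_nonneg by simp
  ultimately show ?thesis using True by simp
next
  case False
  have s: "(\<lambda>y. c * f y) \<in> schwartz" using schwartz_scale[OF assms] .
  have "normMN M N f = normMN M N (\<lambda>y. inverse c * (c * f y))" using False by (simp add: mult.assoc[symmetric])
  also have "\<dots> \<le> norm (inverse c) * normMN M N (\<lambda>y. c * f y)" by (rule normMN_scale_le[OF s])
  finally have h: "normMN M N f \<le> norm (inverse c) * normMN M N (\<lambda>y. c * f y)" .
  have "norm c * normMN M N f \<le> norm c * (norm (inverse c) * normMN M N (\<lambda>y. c * f y))"
    using h by (intro mult_left_mono) auto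
  also have "\<dots> = normMN M N (\<lambda>y. c * f y)" using False by (simp add: norm_inverse)
  finally have "norm c * normMN M N f \<le> normMN M N (\<lambda>y. c * f y)" .
  with normMN_scale_le[OF assms, of M N c] show ?thesis by linarith
qed

lemma normMN_zero:
  assumes "f \<in> schwartz" "normMN M N f = 0" shows "f = (\<lambda>_. 0)"
  using norm_le_normMN[OF assms(1), of _ M N] assms(2) by (auto intro!: ext)




lemma transl_schwartz:
  fixes f :: "'d::finite testfun"
  assumes "f \<in> schwartz" shows "transl t f \<in> schwartz"
proof -
  have sf: "smooth f" using assms schwartz_iff by blast
  have sm: "smooth (transl t f)" using sf unfolding smooth_def Dl_transl transl_diff_iff by blast
  have "bounded (range (\<lambda>x. complex_of_real (monom \<alpha> x) * Dl is (transl t f) x))" for \<alpha> "is"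
  proof -
    let ?m = "sum \<alpha> UNIV" and ?A = "normMN (sum \<alpha> UNIV) (length is) f"
    have "norm (complex_of_real (monom \<alpha> x) * Dl is (transl t f) x)
        \<le> (1 + norm t) ^ ?m * 2 ^ ?m * (1 + real CARD('d) ^ ?m) * ?A" for x
    proof -
      have "norm (complex_of_real (monom \<alpha> ((x - t) + t)) * Dl is f (x - t))
        \<le> (1 + norm t) ^ ?m * 2 ^ ?m * (1 + real CARD('d) ^ ?m) * ?A"
      proof (rule shift_bound)
        show "norm (Dl is f y) \<le> ?A" for y
          using normMN_ge[OF assms, of "\<lambda>_. 0" ?m "is" "length is" y] by (simp add: monom_zero)
        show "norm (complex_of_real (monom (ecoord j ?m) y) * Dl is f y) \<le> ?A" for j y
          by (rule normMN_ge[OF assms]) (auto simp: sum_ecoord)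
      qed simp
      thus ?thesis unfolding Dl_transl by (simp add: transl_def)
    qed
    thus ?thesis unfolding bounded_range_iff by blast
  qed
  thus ?thesis using sm schwartz_iff by blast
qed

lemma normMN_transl:
  fixes f :: "'d::finite testfun"
  assumes "f \<in> schwartz"
  shows "normMN M N (transl t f) \<le> (1 + norm t) ^ M * 2 ^ M * (1 + real CARD('d) ^ M) * normMN M N f"
proof (rule normMN_le)
  fix \<alpha> :: "'d \<Rightarrow> nat" and "is" :: "'d list" and x
  assume a: "sum \<alpha> UNIV \<le> M" "length is \<le> N"
  have "norm (complex_of_real (monom \<alpha> ((x - t) + t)) * Dl is f (x - t))
        \<le> (1 + norm t) ^ M * 2 ^ M * (1 + real CARD('d) ^ M) * normMN M N f"
  proof (rule shift_bound)
    show "norm (Dl is f y) \<le> normMN M N f" for y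
      using normMN_ge[OF assms, of "\<lambda>_. 0" M "is" N y] a by (simp add: monom_zero)
    show "norm (complex_of_real (monom (ecoord j M) y) * Dl is f y) \<le> normMN M N f" for j y
      by (rule normMN_ge[OF assms]) (use a in \<open>auto simp: sum_ecoord\<close>)
  qed (use a in simp)
  thus "norm (complex_of_real (monom \<alpha> x) * Dl is (transl t f) x)
        \<le> (1 + norm t) ^ M * 2 ^ M * (1 + real CARD('d) ^ M) * normMN M N f"
    unfolding Dl_transl by (simp add: transl_def)
qed

lemma partial_refl:
  fixes H :: "'d::finite testfun"
  assumes "H differentiable (at (- x))"
  shows "partial i (\<lambda>y. c * H (- y)) x = - c * partial i H (- x)"
    and "(\<lambda>y. c * H (- y)) differentiable (at x)"
proof -
  let ?D = "\<lambda>v. \<Sum>i\<in>UNIV. of_real (v $ i) * partial i H (- x)"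
  have d1: "(uminus has_derivative uminus) (at x)" by (auto intro!: derivative_eq_intros)
  have d2: "(H has_derivative ?D) (at (- x))" by (rule deriv_partials[OF assms])
  have "((\<lambda>y. H (- y)) has_derivative (\<lambda>v. ?D (- v))) (at x)"
    by (rule has_derivative_compose[OF d1 d2])
  hence d: "((\<lambda>y. c * H (- y)) has_derivative (\<lambda>v. c * ?D (- v))) (at x)"
    by (auto simp: o_def intro!: derivative_eq_intros)
  thus "(\<lambda>y. c * H (- y)) differentiable (at x)" unfolding differentiable_def by blast
  have "partial i (\<lambda>y. c * H (- y)) x = c * ?D (- axis i 1)" by (rule partial_from_deriv[OF d])
  also have "\<dots> = - c * (\<Sum>j\<in>UNIV. of_real (axis i (1::real) $ j) * partial j H (- x))"
    by (simp add: sum_negf)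
  also have "\<dots> = - c * partial i H (- x)" by (simp add: sum_axis)
  finally show "partial i (\<lambda>y. c * H (- y)) x = - c * partial i H (- x)" .
qed

lemma Dl_reflect:
  assumes "smooth f"
  shows "Dl is (reflect f) = (\<lambda>y. (-1) ^ length is * Dl is f (- y))"
proof (induction "is")
  case Nil then show ?case by (simp add: reflect_def)
next
  case (Cons i "is")
  have "Dl (i # is) (reflect f) = partial i (\<lambda>y. (-1) ^ length is * Dl is f (- y))" using Cons by simp
  also have "\<dots> = (\<lambda>y. (-1) ^ length (i # is) * Dl (i # is) f (- y))"
    using assms unfolding smooth_def by (auto intro!: ext simp: partial_refl)
  finally show ?case .
qed

lemma smooth_reflect:
  assumes sf: "smooth f" shows "smooth (reflect f)"
  unfolding smooth_def
proof (intro allI)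
  fix "is" x
  have "Dl is f differentiable (at (- x))" using sf unfolding smooth_def by blast
  from partial_refl(2)[OF this, of "(-1) ^ length is"]
  show "Dl is (reflect f) differentiable (at x)" by (simp add: Dl_reflect[OF sf])
qed

lemma abs_monom_neg: "\<bar>monom \<alpha> (- x)\<bar> = \<bar>monom \<alpha> x\<bar>"
  by (simp add: monom_def abs_prod power_abs)

lemma reflect_elem:
  assumes "smooth f"
  shows "norm (complex_of_real (monom \<alpha> x) * Dl is (reflect f) x)
       = norm (complex_of_real (monom \<alpha> (- x)) * Dl is f (- x))"
  by (simp add: Dl_reflect[OF assms] norm_mult norm_power abs_monom_neg)

lemma reflect_schwartz:
  assumes "f \<in> schwartz" shows "reflect f \<in> schwartz"
proof -
  have sf: "smooth f" using assms schwartz_iff by blast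
  have "bounded (range (\<lambda>x. complex_of_real (monom \<alpha> x) * Dl is (reflect f) x))" for \<alpha> "is"
  proof -
    obtain B where "\<And>x. norm (complex_of_real (monom \<alpha> x) * Dl is f x) \<le> B"
      using assms unfolding schwartz_iff bounded_range_iff by blast
    thus ?thesis unfolding bounded_range_iff reflect_elem[OF sf] by blast
  qed
  thus ?thesis using smooth_reflect[OF sf] schwartz_iff by blast
qed

lemma reflect_reflect: "reflect (reflect f) = f"
  by (simp add: reflect_def)

lemma normMN_reflect_le:
  fixes f :: "'d::finite testfun"
  assumes "f \<in> schwartz" shows "normMN M N (reflect f) \<le> normMN M N f"
proof (rule normMN_le)
  fix \<alpha> :: "'d \<Rightarrow> nat" and "is" :: "'d list" and x assume "sum \<alpha> UNIV \<le> M" "length is \<le> N"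
  hence "norm (complex_of_real (monom \<alpha> (- x)) * Dl is f (- x)) \<le> normMN M N f"
    using assms by (intro normMN_ge) auto
  moreover have "smooth f" using assms schwartz_iff by blast
  ultimately show "norm (complex_of_real (monom \<alpha> x) * Dl is (reflect f) x) \<le> normMN M N f"
    by (simp add: reflect_elem)
qed

lemma normMN_reflect:
  assumes "f \<in> schwartz" shows "normMN M N (reflect f) = normMN M N f"
  using normMN_reflect_le[OF assms] normMN_reflect_le[OF reflect_schwartz[OF assms]]
  by (auto simp: reflect_reflect intro: order.antisym)




context
  fixes \<psi> :: "('d::finite) testfun \<Rightarrow> complex"
  assumes tp: "tempered \<psi>"
begin

lemma psi_lin: "f \<in> schwartz \<Longrightarrow> g \<in> schwartz \<Longrightarrow> \<psi> (\<lambda>x. a * f x + b * g x) = a * \<psi> f + b * \<psi> g"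
  using tp unfolding tempered_def by blast

lemma psi_zero: "\<psi> (\<lambda>_. 0) = 0"
  using psi_lin[OF schwartz_zero schwartz_zero, of 0 0] by simp

lemma psi_diff: "f \<in> schwartz \<Longrightarrow> g \<in> schwartz \<Longrightarrow> \<psi> (\<lambda>x. f x - g x) = \<psi> f - \<psi> g"
  using psi_lin[of f g 1 "-1"] by simp

lemma psi_scale: "f \<in> schwartz \<Longrightarrow> \<psi> (\<lambda>x. c * f x) = c * \<psi> f"
  using psi_lin[of f f c 0] by simp

lemma psi_add: "f \<in> schwartz \<Longrightarrow> g \<in> schwartz \<Longrightarrow> \<psi> (\<lambda>x. f x + g x) = \<psi> f + \<psi> g"
  using psi_lin[of f g 1 1] by simp

lemma psi_sum:
  fixes n :: nat
  assumes "\<And>k. f k \<in> schwartz"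
  shows "\<psi> (\<lambda>x. \<Sum>k<n. f k x) = (\<Sum>k<n. \<psi> (f k))"
proof (induction n)
  case 0 then show ?case using psi_zero by simp
next
  case (Suc n)
  have "\<psi> (\<lambda>x. \<Sum>k<Suc n. f k x) = \<psi> (\<lambda>x. (\<Sum>k<n. f k x) + f n x)" by simp
  also have "\<dots> = \<psi> (\<lambda>x. \<Sum>k<n. f k x) + \<psi> (f n)"
    by (rule psi_add[OF schwartz_sum[OF assms] assms])
  finally show ?case using Suc by simp
qed

end

lemma seminorm_bound:
  fixes \<Phi> :: "'d::finite testfun \<Rightarrow> complex"
  assumes hom: "\<And>g c. g \<in> schwartz \<Longrightarrow> \<Phi> (\<lambda>x. c * g x) = c * \<Phi> g"
    and dpos: "\<delta> > 0"
    and small: "\<And>g. g \<in> schwartz \<Longrightarrow> normMN M N g < \<delta> \<Longrightarrow> norm (\<Phi> g) < 1"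
    and gS: "g \<in> schwartz"
  shows "norm (\<Phi> g) \<le> (2 / \<delta>) * normMN M N g"
proof (cases "normMN M N g = 0")
  case True
  hence "g = (\<lambda>_. 0)" using normMN_zero[OF gS] by blast
  hence "g = (\<lambda>x. 0 * g x)" by simp
  hence "\<Phi> g = 0 * \<Phi> g" using hom[OF gS, of 0] by metis
  thus ?thesis using True by simp
next
  case False
  define n where "n = normMN M N g"
  have npos: "n > 0" using False normMN_nonneg[OF gS, of M N] n_def by linarith
  define c where "c = \<delta> / (2 * n)"
  have cpos: "c > 0" using npos dpos c_def by simp
  have hS: "(\<lambda>x. complex_of_real c * g x) \<in> schwartz" by (rule schwartz_scale[OF gS])
  have "normMN M N (\<lambda>x. complex_of_real c * g x) = c * n"
    using normMN_scale[OF gS] cpos n_def by simp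
  also have "\<dots> = \<delta> / 2" using npos by (simp add: c_def)
  also have "\<dots> < \<delta>" using dpos by simp
  finally have "norm (\<Phi> (\<lambda>x. complex_of_real c * g x)) < 1" by (rule small[OF hS])
  hence "c * norm (\<Phi> g) < 1" using hom[OF gS] cpos by (simp add: norm_mult)
  hence "norm (\<Phi> g) < 1 / c" using cpos by (simp add: field_simps)
  also have "1 / c = (2 / \<delta>) * n" using npos dpos by (simp add: c_def)
  finally show ?thesis using n_def by simp
qed

lemma psi_bound:
  fixes \<psi> :: "'d::finite testfun \<Rightarrow> complex"
  assumes tp: "tempered \<psi>"
  shows "\<exists>C M N. C > 0 \<and> (\<forall>g\<in>schwartz. norm (\<psi> g) \<le> C * normMN M N g)"
proof -
  obtain M N \<delta> where dpos: "\<delta> > 0"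
    and H: "\<And>f. f \<in> sball (\<lambda>_. 0) M N \<delta> \<Longrightarrow> norm (\<psi> f - \<psi> (\<lambda>_. 0)) < 1"
  proof -
    have "\<forall>g\<in>schwartz. \<forall>\<epsilon>>0. \<exists>M N \<delta>. \<delta> > 0 \<and>
         (\<forall>f\<in>sball g M N \<delta>. norm (\<psi> f - \<psi> g) < \<epsilon>)" using tp unfolding tempered_def by blast
    from this[rule_format, OF schwartz_zero, of 1]
    show ?thesis using that by auto
  qed
  have small: "norm (\<psi> g) < 1" if "g \<in> schwartz" "normMN M N g < \<delta>" for g
  proof -
    have "g - (\<lambda>_. 0) = g" by (simp add: fun_eq_iff)
    hence "g \<in> sball (\<lambda>_. 0) M N \<delta>" using that unfolding sball_def by simp
    from H[OF this] show ?thesis using psi_zero[OF tp] by simp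
  qed
  have "\<forall>g\<in>schwartz. norm (\<psi> g) \<le> (2 / \<delta>) * normMN M N g"
    using seminorm_bound[of \<psi> \<delta> M N] psi_scale[OF tp] dpos small by blast
  thus ?thesis using dpos by (intro exI[of _ "2/\<delta>"]) auto
qed




lemma transl_transl: "transl s (transl h g) = transl (s + h) g"
  by (simp add: transl_def fun_eq_iff algebra_simps)

lemma transl_diff: "transl t (\<lambda>x. f x - g x) = (\<lambda>x. transl t f x - transl t g x)"
  by (simp add: transl_def)

lemma transl_scale: "transl t (\<lambda>x. c * f x) = (\<lambda>x. c * transl t f x)"
  by (simp add: transl_def)

lemma transl_zero: "transl t (\<lambda>_. 0) = (\<lambda>_. 0)"
  by (simp add: transl_def)

lemma transl_sum: "transl t (\<lambda>x. \<Sum>k<n. f k x) = (\<lambda>x. \<Sum>k<n. transl t (f k) x)"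
  by (simp add: transl_def)

lemma fun_diff_eq: "(f - g) = (\<lambda>x. f x - g x)"
  by (simp add: fun_eq_iff)

context
  fixes \<psi> :: "('d::finite) testfun \<Rightarrow> complex"
  assumes tp: "tempered \<psi>"
begin

lemma P1_iff: "(\<forall>f\<in>schwartz. bounded (range (dconv \<psi> f))) \<longleftrightarrow>
   (\<forall>g\<in>schwartz. bounded (range (\<lambda>t. \<psi> (transl t g))))"
proof
  assume H: "\<forall>f\<in>schwartz. bounded (range (dconv \<psi> f))"
  show "\<forall>g\<in>schwartz. bounded (range (\<lambda>t. \<psi> (transl t g)))"
  proof
    fix g :: "'d testfun" assume g: "g \<in> schwartz"
    have "dconv \<psi> (reflect g) = (\<lambda>t. \<psi> (transl t g))"
      by (simp add: dconv_def reflect_reflect fun_eq_iff)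
    thus "bounded (range (\<lambda>t. \<psi> (transl t g)))" using H reflect_schwartz[OF g] by metis
  qed
next
  assume H: "\<forall>g\<in>schwartz. bounded (range (\<lambda>t. \<psi> (transl t g)))"
  show "\<forall>f\<in>schwartz. bounded (range (dconv \<psi> f))"
  proof
    fix f :: "'d testfun" assume f: "f \<in> schwartz"
    have "dconv \<psi> f = (\<lambda>t. \<psi> (transl t (reflect f)))" by (simp add: dconv_def fun_eq_iff)
    thus "bounded (range (dconv \<psi> f))" using H reflect_schwartz[OF f] by metis
  qed
qed

lemma P3_iff: "(\<exists>M N C. C > 0 \<and> (\<forall>f\<in>schwartz. \<forall>t. norm (dconv \<psi> f t) \<le> C * normMN M N f)) \<longleftrightarrow>
   (\<exists>M N C. C > 0 \<and> (\<forall>g\<in>schwartz. \<forall>t. norm (\<psi> (transl t g)) \<le> C * normMN M N g))"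
proof
  assume "\<exists>M N C. C > 0 \<and> (\<forall>f\<in>schwartz. \<forall>t. norm (dconv \<psi> f t) \<le> C * normMN M N f)"
  then obtain M N C where C: "C > 0" and H: "\<forall>f\<in>schwartz. \<forall>t. norm (dconv \<psi> f t) \<le> C * normMN M N f"
    by blast
  have "norm (\<psi> (transl t g)) \<le> C * normMN M N g" if g: "g \<in> schwartz" for g t
    using H[rule_format, OF reflect_schwartz[OF g], of t]
    by (simp add: dconv_def reflect_reflect normMN_reflect[OF g])
  thus "\<exists>M N C. C > 0 \<and> (\<forall>g\<in>schwartz. \<forall>t. norm (\<psi> (transl t g)) \<le> C * normMN M N g)"
    using C by blast
next
  assume "\<exists>M N C. C > 0 \<and> (\<forall>g\<in>schwartz. \<forall>t. norm (\<psi> (transl t g)) \<le> C * normMN M N g)"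
  then obtain M N C where C: "C > 0" and H: "\<forall>g\<in>schwartz. \<forall>t. norm (\<psi> (transl t g)) \<le> C * normMN M N g"
    by blast
  have "norm (dconv \<psi> f t) \<le> C * normMN M N f" if f: "f \<in> schwartz" for f t
    using H[rule_format, OF reflect_schwartz[OF f], of t]
    by (simp add: dconv_def normMN_reflect[OF f])
  thus "\<exists>M N C. C > 0 \<and> (\<forall>f\<in>schwartz. \<forall>t. norm (dconv \<psi> f t) \<le> C * normMN M N f)"
    using C by blast
qed

lemma iii_imp_iv:
  assumes C: "C > 0" and H: "\<forall>g\<in>schwartz. \<forall>t. norm (\<psi> (transl t g)) \<le> C * normMN M N g"
  shows "equicont_S (\<lambda>t. transl_distr t \<psi>) UNIV"
  unfolding equicont_S_def
proof (intro ballI allI impI)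
  fix g :: "'d testfun" and \<epsilon> :: real
  assume g: "g \<in> schwartz" and e: "\<epsilon> > 0"
  have "norm (transl_distr i \<psi> f - transl_distr i \<psi> g) < \<epsilon>" if f: "f \<in> sball g M N (\<epsilon> / C)" for i f
  proof -
    have fS: "f \<in> schwartz" and fn: "normMN M N (\<lambda>x. f x - g x) < \<epsilon> / C"
      using f unfolding sball_def fun_diff_eq by auto
    have dS: "(\<lambda>x. f x - g x) \<in> schwartz" by (rule schwartz_diff[OF fS g])
    have "transl_distr i \<psi> f - transl_distr i \<psi> g = \<psi> (transl (- i) (\<lambda>x. f x - g x))"
      unfolding transl_distr_def transl_diff
      by (rule psi_diff[OF tp transl_schwartz[OF fS] transl_schwartz[OF g], symmetric])
    also have "norm \<dots> \<le> C * normMN M N (\<lambda>x. f x - g x)" using H dS by blast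
    also have "\<dots> < C * (\<epsilon> / C)" by (rule mult_strict_left_mono[OF fn C])
    also have "\<dots> = \<epsilon>" using C by simp
    finally show ?thesis .
  qed
  thus "\<exists>M N \<delta>. 0 < \<delta> \<and> (\<forall>i\<in>UNIV. \<forall>f\<in>sball g M N \<delta>. norm (transl_distr i \<psi> f - transl_distr i \<psi> g) < \<epsilon>)"
    using C e by (intro exI[of _ M] exI[of _ N] exI[of _ "\<epsilon> / C"]) auto
qed

lemma iv_imp_iii:
  assumes E: "equicont_S (\<lambda>t. transl_distr t \<psi>) UNIV"
  shows "\<exists>M N C. C > 0 \<and> (\<forall>g\<in>schwartz. \<forall>t. norm (\<psi> (transl t g)) \<le> C * normMN M N g)"
proof -
  have "\<forall>g\<in>schwartz. \<forall>\<epsilon>>0. \<exists>M N \<delta>. \<delta> > 0 \<and>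
       (\<forall>i\<in>UNIV. \<forall>f\<in>sball g M N \<delta>. norm (transl_distr i \<psi> f - transl_distr i \<psi> g) < \<epsilon>)"
    using E unfolding equicont_S_def by blast
  hence h1: "\<forall>\<epsilon>>0. \<exists>M N \<delta>. \<delta> > 0 \<and>
       (\<forall>i\<in>UNIV. \<forall>f\<in>sball (\<lambda>_. 0) M N \<delta>. norm (transl_distr i \<psi> f - transl_distr i \<psi> (\<lambda>_. 0)) < \<epsilon>)"
    using schwartz_zero by blast
  have "\<exists>M N \<delta>. \<delta> > 0 \<and>
       (\<forall>i\<in>UNIV. \<forall>f\<in>sball (\<lambda>_. 0) M N \<delta>. norm (transl_distr i \<psi> f - transl_distr i \<psi> (\<lambda>_. 0)) < 1)"
    using h1[rule_format, OF zero_less_one] .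
  then obtain M N \<delta> where dpos: "\<delta> > 0"
    and H: "\<And>i f. f \<in> sball (\<lambda>_. 0) M N \<delta> \<Longrightarrow> norm (transl_distr i \<psi> f - transl_distr i \<psi> (\<lambda>_. 0)) < 1"
    by blast
  have "norm (\<psi> (transl t g)) \<le> (2 / \<delta>) * normMN M N g" if g: "g \<in> schwartz" for g t
  proof (rule seminorm_bound[of "\<lambda>g. \<psi> (transl t g)" \<delta> M N, OF _ dpos _ g])
    show "\<psi> (transl t (\<lambda>x. c * h x)) = c * \<psi> (transl t h)" if "h \<in> schwartz" for h c
      unfolding transl_scale by (rule psi_scale[OF tp transl_schwartz[OF that]])
    show "norm (\<psi> (transl t h)) < 1" if "h \<in> schwartz" "normMN M N h < \<delta>" for h
    proof -
      have "h - (\<lambda>_. 0) = h" by (simp add: fun_eq_iff)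
      hence "h \<in> sball (\<lambda>_. 0) M N \<delta>" using that unfolding sball_def by simp
      from H[OF this, of "- t"] show ?thesis
        by (simp add: transl_distr_def transl_zero psi_zero[OF tp])
    qed
  qed
  thus ?thesis using dpos by (intro exI[of _ M] exI[of _ N] exI[of _ "2/\<delta>"]) auto
qed

end



lemma partial_Dl: "partial i (Dl is g) = Dl (i # is) g" by simp

lemma transl_cont_bound:
  fixes g :: "'d::finite testfun"
  assumes gS: "g \<in> schwartz" and h1: "norm h \<le> 1"
  shows "normMN M N (\<lambda>x. transl h g x - g x)
     \<le> norm h * (real CARD('d) * (2 ^ M * 2 ^ M * (1 + real CARD('d) ^ M)) * normMN M (Suc N) g)"
proof (rule normMN_le)
  fix \<alpha> :: "'d \<Rightarrow> nat" and "is" :: "'d list" and x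
  assume a: "sum \<alpha> UNIV \<le> M" "length is \<le> N"
  let ?K0 = "2 ^ M * 2 ^ M * (1 + real CARD('d) ^ M)"
  let ?A = "normMN M (Suc N) g"
  have sg: "smooth g" using gS schwartz_iff by blast
  have stg: "smooth (transl h g)" using transl_schwartz[OF gS] schwartz_iff by blast
  define G where "G = Dl is g"
  have DlE: "Dl is (\<lambda>x. transl h g x - g x) = (\<lambda>x. G (x - h) - G x)"
    unfolding Dl_diff[OF stg sg] Dl_transl G_def by (simp add: transl_def)
  have A0: "0 \<le> ?A" by (rule normMN_nonneg[OF gS])
  define m where "m = \<bar>monom \<alpha> x\<bar>"
  have main: "m * norm (G (x - h) - G x) \<le> norm h * (real CARD('d) * ?K0 * ?A)"
  proof (cases "m = 0")
    case True then show ?thesis using A0 by simp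
  next
    case False
    hence mpos: "m > 0" using m_def by simp
    define B where "B = real CARD('d) * ?K0 * ?A / m"
    have pb: "m * norm (partial i G (x + s *\<^sub>R (- h))) \<le> ?K0 * ?A" if z: "0 \<le> s" "s \<le> 1" for i s
    proof -
      define z where "z = x + s *\<^sub>R (- h)"
      have zsx: "z + s *\<^sub>R h = x" by (simp add: z_def)
      have nsh: "norm (s *\<^sub>R h) \<le> 1" using z h1 by (simp add: mult_le_one)
      have "norm (complex_of_real (monom \<alpha> (z + s *\<^sub>R h)) * Dl (i # is) g z)
          \<le> (1 + norm (s *\<^sub>R h)) ^ M * 2 ^ M * (1 + real CARD('d) ^ M) * ?A"
      proof (rule shift_bound)
        show "norm (Dl (i # is) g y) \<le> ?A" for y
          using normMN_ge[OF gS, of "\<lambda>_. 0" M "i # is" "Suc N" y] a by (simp add: monom_zero)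
        show "norm (complex_of_real (monom (ecoord j M) y) * Dl (i # is) g y) \<le> ?A" for j y
          by (rule normMN_ge[OF gS]) (use a in \<open>auto simp: sum_ecoord\<close>)
      qed (use a in simp)
      also have "\<dots> \<le> 2 ^ M * 2 ^ M * (1 + real CARD('d) ^ M) * ?A"
      proof -
        have "(1 + norm (s *\<^sub>R h)) ^ M \<le> 2 ^ M" by (intro power_mono) (use nsh in auto)
        thus ?thesis by (intro mult_right_mono A0) auto
      qed
      finally have "norm (complex_of_real (monom \<alpha> x) * Dl (i # is) g z) \<le> ?K0 * ?A"
        unfolding zsx .
      thus ?thesis unfolding z_def[symmetric] by (simp add: m_def G_def norm_mult)
    qed
    have "norm (G (x + (- h)) - G x) \<le> norm (- h) * B"
    proof (rule differentiable_bound_segment[where G=UNIV and f'="\<lambda>z v. \<Sum>i\<in>UNIV. of_real (v $ i) * partial i G z"])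
      show "(G has_derivative (\<lambda>v. \<Sum>i\<in>UNIV. of_real (v $ i) * partial i G z)) (at z within UNIV)" for z
        using deriv_partials[of G z] sg unfolding smooth_def G_def by simp
      show "onorm (\<lambda>v. \<Sum>i\<in>UNIV. of_real (v $ i) * partial i G (x + s *\<^sub>R (- h))) \<le> B"
        if s: "s \<in> {0..1}" for s
      proof (rule onorm_le)
        fix v :: "real^'d"
        let ?z = "x + s *\<^sub>R (- h)"
        have "norm (\<Sum>i\<in>UNIV. of_real (v $ i) * partial i G ?z) \<le> (\<Sum>i\<in>UNIV. norm (of_real (v $ i) * partial i G ?z))"
          by (rule norm_sum)
        also have "\<dots> \<le> (\<Sum>i\<in>(UNIV::'d set). norm v * (?K0 * ?A / m))"
        proof (rule sum_mono)
          fix i :: 'd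
          have "m * norm (partial i G ?z) \<le> ?K0 * ?A" using pb[of s i] s by simp
          hence p: "norm (partial i G ?z) \<le> ?K0 * ?A / m" using mpos by (simp add: field_simps)
          have "norm (of_real (v $ i) * partial i G ?z) = \<bar>v $ i\<bar> * norm (partial i G ?z)"
            by (simp add: norm_mult)
          also have "\<dots> \<le> norm v * (?K0 * ?A / m)"
            by (intro mult_mono p component_le_norm_cart) auto
          finally show "norm (of_real (v $ i) * partial i G ?z) \<le> norm v * (?K0 * ?A / m)" .
        qed
        also have "\<dots> = B * norm v" by (simp add: B_def)
        finally show "norm (\<Sum>i\<in>UNIV. of_real (v $ i) * partial i G ?z) \<le> B * norm v" .
      qed
    qed auto
    hence "norm (G (x - h) - G x) \<le> norm h * B" by simp
    hence "m * norm (G (x - h) - G x) \<le> m * (norm h * B)" using mpos by simp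
    also have "\<dots> = norm h * (real CARD('d) * ?K0 * ?A)" using mpos by (simp add: B_def)
    finally show ?thesis .
  qed
  show "norm (complex_of_real (monom \<alpha> x) * Dl is (\<lambda>x. transl h g x - g x) x)
      \<le> norm h * (real CARD('d) * ?K0 * ?A)"
    using main by (simp add: DlE norm_mult m_def)
qed

lemma iii_imp_ucont:
  fixes \<psi> :: "'d::finite testfun \<Rightarrow> complex"
  assumes tp: "tempered \<psi>" and C: "C > 0"
    and H: "\<forall>g\<in>schwartz. \<forall>t. norm (\<psi> (transl t g)) \<le> C * normMN M N g"
    and fS: "f \<in> schwartz"
  shows "uniformly_continuous_on UNIV (dconv \<psi> f)"
  unfolding uniformly_continuous_on_def
proof (intro allI impI)
  fix e :: real assume e: "e > 0"
  define g where "g = reflect f"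
  have gS: "g \<in> schwartz" using reflect_schwartz[OF fS] g_def by simp
  define K where "K = C * (real CARD('d) * (2 ^ M * 2 ^ M * (1 + real CARD('d) ^ M)) * normMN M (Suc N) g)"
  have K0: "K \<ge> 0" unfolding K_def using C normMN_nonneg[OF gS] by simp
  define d where "d = min 1 (e / (K + 1))"
  have dpos: "d > 0" using e K0 by (simp add: d_def)
  have "dist (dconv \<psi> f t) (dconv \<psi> f s) < e" if ts: "dist t s < d" for t s
  proof -
    let ?h = "t - s"
    have hn: "norm ?h < d" using ts by (simp add: dist_norm)
    have h1: "norm ?h \<le> 1" using hn by (simp add: d_def)
    have dS: "(\<lambda>x. transl ?h g x - g x) \<in> schwartz"
      by (rule schwartz_diff[OF transl_schwartz[OF gS] gS])
    have "dconv \<psi> f t - dconv \<psi> f s = \<psi> (transl s (transl ?h g)) - \<psi> (transl s g)"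
      by (simp add: dconv_def g_def transl_transl)
    also have "\<dots> = \<psi> (transl s (\<lambda>x. transl ?h g x - g x))"
      unfolding transl_diff
      by (rule psi_diff[OF tp transl_schwartz[OF transl_schwartz[OF gS]] transl_schwartz[OF gS], symmetric])
    finally have eq: "dconv \<psi> f t - dconv \<psi> f s = \<psi> (transl s (\<lambda>x. transl ?h g x - g x))" .
    have "norm (dconv \<psi> f t - dconv \<psi> f s) \<le> C * normMN M N (\<lambda>x. transl ?h g x - g x)"
      unfolding eq using H dS by blast
    also have "\<dots> \<le> C * (norm ?h * (real CARD('d) * (2 ^ M * 2 ^ M * (1 + real CARD('d) ^ M)) * normMN M (Suc N) g))"
      by (intro mult_left_mono transl_cont_bound[OF gS h1]) (use C in auto)
    also have "\<dots> = norm ?h * K" by (simp add: K_def)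
    also have "\<dots> \<le> d * K" using hn K0 by (intro mult_right_mono) auto
    also have "\<dots> \<le> (e / (K + 1)) * K" using K0 by (intro mult_right_mono) (auto simp: d_def)
    also have "\<dots> < e" using e K0 by (simp add: field_simps)
    finally show ?thesis by (simp add: dist_norm)
  qed
  thus "\<exists>d>0. \<forall>x\<in>UNIV. \<forall>x'\<in>UNIV. dist x' x < d \<longrightarrow> dist (dconv \<psi> f x') (dconv \<psi> f x) < e"
    using dpos by blast
qed




lemma tail_tendsto:
  fixes c :: "nat \<Rightarrow> real"
  assumes "summable c"
  shows "(\<lambda>n. \<Sum>k. c (k + n)) \<longlonglongrightarrow> 0"
proof -
  have "(\<lambda>n. \<Sum>k. c (k + n)) = (\<lambda>n. suminf c - sum c {..<n})"
    using suminf_split_initial_segment[OF assms] by (auto simp: fun_eq_iff algebra_simps)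
  moreover have "(\<lambda>n. suminf c - sum c {..<n}) \<longlonglongrightarrow> suminf c - suminf c"
    by (intro tendsto_diff tendsto_const summable_LIMSEQ assms)
  ultimately show ?thesis by simp
qed

locale ser =
  fixes f :: "nat \<Rightarrow> 'd::finite testfun" and c :: "nat \<Rightarrow> real"
  assumes fS: "\<And>k. f k \<in> schwartz" and fc: "\<And>k. normMN k k (f k) \<le> c k" and sc: "summable c"
begin

definition Gs :: "'d list \<Rightarrow> 'd testfun" where
  "Gs is x = (\<Sum>k. Dl is (f k) x)"

lemma sm: "smooth (f k)" using fS schwartz_iff by blast

lemma bnd: "sum \<alpha> UNIV \<le> k \<Longrightarrow> length is \<le> k \<Longrightarrow>
    norm (complex_of_real (monom \<alpha> x) * Dl is (f k) x) \<le> c k"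
  by (rule order_trans[OF normMN_ge[OF fS] fc])

lemma bnd0: "length is \<le> k \<Longrightarrow> norm (Dl is (f k) x) \<le> c k"
  using bnd[of "\<lambda>_. 0" k "is" x] by (simp add: monom_zero)

lemma summ: "summable (\<lambda>k. Dl is (f k) x)"
  by (rule summable_comparison_test'[OF sc, of "length is"]) (use bnd0 in auto)

lemma summ_shift: "summable (\<lambda>k. c (k + n))"
  using summable_iff_shift[of c n] sc by simp

lemma tail:
  assumes "sum \<alpha> UNIV \<le> n" "length is \<le> n"
  shows "norm (complex_of_real (monom \<alpha> x) * (Gs is x - (\<Sum>k<n. Dl is (f k) x))) \<le> (\<Sum>k. c (k + n))"
proof -
  have "Gs is x - (\<Sum>k<n. Dl is (f k) x) = (\<Sum>k. Dl is (f (k + n)) x)"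
    unfolding Gs_def using suminf_split_initial_segment[OF summ, of "is" x n] by simp
  hence "complex_of_real (monom \<alpha> x) * (Gs is x - (\<Sum>k<n. Dl is (f k) x))
       = (\<Sum>k. complex_of_real (monom \<alpha> x) * Dl is (f (k + n)) x)"
    using suminf_mult[of "\<lambda>k. Dl is (f (k + n)) x" "complex_of_real (monom \<alpha> x)"]
      summable_iff_shift[of "\<lambda>k. Dl is (f k) x" n] summ[of "is" x] by simp
  also have "norm \<dots> \<le> (\<Sum>k. c (k + n))"
    by (rule norm_suminf_le[OF _ summ_shift]) (use assms in \<open>auto intro!: bnd\<close>)
  finally show ?thesis .
qed

lemma tail0: "length is \<le> n \<Longrightarrow> norm (Gs is x - (\<Sum>k<n. Dl is (f k) x)) \<le> (\<Sum>k. c (k + n))"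
  using tail[of "\<lambda>_. 0" n "is" x] by (simp add: monom_zero)

lemma deriv: "(Gs is has_derivative (\<lambda>v. \<Sum>i\<in>UNIV. of_real (v $ i) * Gs (i # is) x)) (at x)"
proof -
  let ?f' = "\<lambda>k x v. \<Sum>i\<in>UNIV. of_real (v $ i) * Dl (i # is) (f k) x"
  let ?g' = "\<lambda>x v. \<Sum>i\<in>UNIV. of_real (v $ i) * Gs (i # is) x"
  have "\<exists>g. \<forall>x\<in>UNIV. (\<lambda>k. Dl is (f k) x) sums (g x) \<and> (g has_derivative ?g' x) (at x within UNIV)"
  proof (rule has_derivative_series[where f'="?f'"])
    show "(Dl is (f k) has_derivative ?f' k x) (at x within UNIV)" for k x
      using deriv_partials[of "Dl is (f k)" x] sm[of k] unfolding smooth_def by simp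
    show "\<forall>\<^sub>F n in sequentially. \<forall>x\<in>UNIV. \<forall>h. norm ((\<Sum>k<n. ?f' k x h) - ?g' x h) \<le> e * norm h"
      if e: "e > 0" for e
    proof -
      have "((\<lambda>n. real CARD('d) * (\<Sum>k. c (k + n))) \<longlongrightarrow> 0) sequentially"
        using tendsto_mult_left[OF tail_tendsto[OF sc], of "real CARD('d)"] by simp
      from order_tendstoD(2)[OF this e]
      have ev1: "\<forall>\<^sub>F n in sequentially. real CARD('d) * (\<Sum>k. c (k + n)) < e" .
      have ev2: "\<forall>\<^sub>F n in sequentially. Suc (length is) \<le> n" by (rule eventually_ge_at_top)
      show ?thesis
      proof (rule eventually_mono[OF eventually_conj[OF ev1 ev2]], intro ballI allI)
        fix n x h assume n: "real CARD('d) * (\<Sum>k. c (k + n)) < e \<and> Suc (length is) \<le> n"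
        have "(\<Sum>k<n. ?f' k x h) - ?g' x h
            = (\<Sum>i\<in>UNIV. of_real (h $ i) * ((\<Sum>k<n. Dl (i # is) (f k) x) - Gs (i # is) x))"
          by (simp add: sum.swap[of _ "{..<_}"] sum_distrib_left sum_subtractf algebra_simps)
        also have "norm \<dots> \<le> (\<Sum>i\<in>(UNIV::'d set). norm h * (\<Sum>k. c (k + n)))"
        proof (rule order_trans[OF norm_sum sum_mono])
          fix i :: 'd
          have t: "norm ((\<Sum>k<n. Dl (i # is) (f k) x) - Gs (i # is) x) \<le> (\<Sum>k. c (k + n))"
            using tail0[of "i # is" n x] n by (simp add: norm_minus_commute)
          show "norm (of_real (h $ i) * ((\<Sum>k<n. Dl (i # is) (f k) x) - Gs (i # is) x))
              \<le> norm h * (\<Sum>k. c (k + n))"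
            unfolding norm_mult by (intro mult_mono t) (auto intro: component_le_norm_cart)
        qed
        also have "\<dots> = (real CARD('d) * (\<Sum>k. c (k + n))) * norm h" by simp
        also have "\<dots> \<le> e * norm h" using n by (intro mult_right_mono) auto
        finally show "norm ((\<Sum>k<n. ?f' k x h) - ?g' x h) \<le> e * norm h" .
      qed
    qed
    show "(\<lambda>k. Dl is (f k) x) sums Gs is x" unfolding Gs_def by (rule summable_sums[OF summ])
  qed auto
  then obtain g where g: "\<And>y. (\<lambda>k. Dl is (f k) y) sums (g y)" "\<And>y. (g has_derivative ?g' y) (at y)"
    by auto
  have "g = Gs is" using g(1) sums_unique unfolding Gs_def by (auto simp: fun_eq_iff)
  thus ?thesis using g(2) by simp
qed

definition F :: "'d testfun" where "F x = (\<Sum>k. f k x)"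

lemma Dl_F: "Dl is F = Gs is"
proof (induction "is")
  case Nil then show ?case by (simp add: F_def Gs_def fun_eq_iff)
next
  case (Cons i "is")
  have "Dl (i # is) F = partial i (Gs is)" using Cons by simp
  also have "\<dots> = Gs (i # is)"
    using partial_from_deriv[OF deriv] by (auto simp: fun_eq_iff sum_axis)
  finally show ?case .
qed

lemma smooth_F: "smooth F"
  unfolding smooth_def Dl_F using deriv differentiable_def by blast

definition Sn :: "nat \<Rightarrow> 'd testfun" where "Sn n x = (\<Sum>k<n. f k x)"

lemma Sn_S: "Sn n \<in> schwartz" unfolding Sn_def[abs_def] by (rule schwartz_sum[OF fS])

lemma Dl_Sn: "Dl is (Sn n) = (\<lambda>x. \<Sum>k<n. Dl is (f k) x)"
  unfolding Sn_def[abs_def] using Dl_sum[where f=f and n=n] sm by blast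

lemma F_S: "F \<in> schwartz"
proof -
  have "bounded (range (\<lambda>x. complex_of_real (monom \<alpha> x) * Dl is F x))" for \<alpha> "is"
  proof -
    define n where "n = max (sum \<alpha> UNIV) (length is)"
    obtain B where B: "\<And>x. norm (complex_of_real (monom \<alpha> x) * Dl is (Sn n) x) \<le> B"
      using Sn_S[of n] unfolding schwartz_iff bounded_range_iff by blast
    have "norm (complex_of_real (monom \<alpha> x) * Dl is F x) \<le> (\<Sum>k. c (k + n)) + B" for x
    proof -
      have "complex_of_real (monom \<alpha> x) * Dl is F x =
          complex_of_real (monom \<alpha> x) * (Gs is x - (\<Sum>k<n. Dl is (f k) x)) + complex_of_real (monom \<alpha> x) * Dl is (Sn n) x"
        by (simp add: Dl_F Dl_Sn algebra_simps)
      also have "norm \<dots> \<le> (\<Sum>k. c (k + n)) + B"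
        by (rule order_trans[OF norm_triangle_ineq add_mono[OF tail B]]) (auto simp: n_def)
      finally show ?thesis .
    qed
    thus ?thesis unfolding bounded_range_iff by blast
  qed
  thus ?thesis using smooth_F schwartz_iff by blast
qed

lemma F_tail:
  assumes "M \<le> n" "N \<le> n"
  shows "normMN M N (\<lambda>x. F x - Sn n x) \<le> (\<Sum>k. c (k + n))"
proof (rule normMN_le)
  fix \<alpha> :: "'d \<Rightarrow> nat" and "is" :: "'d list" and x
  assume a: "sum \<alpha> UNIV \<le> M" "length is \<le> N"
  have sSn: "smooth (Sn n)" using Sn_S schwartz_iff by blast
  have "Dl is (\<lambda>x. F x - Sn n x) x = Gs is x - (\<Sum>k<n. Dl is (f k) x)"
    by (simp add: Dl_diff[OF smooth_F sSn] Dl_F Dl_Sn)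
  thus "norm (complex_of_real (monom \<alpha> x) * Dl is (\<lambda>x. F x - Sn n x) x) \<le> (\<Sum>k. c (k + n))"
    using tail[of \<alpha> n "is" x] a assms by simp
qed

end




lemma i_imp_iii:
  fixes \<psi> :: "'d::finite testfun \<Rightarrow> complex"
  assumes tp: "tempered \<psi>"
    and P1: "\<forall>g\<in>schwartz. bounded (range (\<lambda>t. \<psi> (transl t g)))"
  shows "\<exists>M N C. C > 0 \<and> (\<forall>g\<in>schwartz. \<forall>t. norm (\<psi> (transl t g)) \<le> C * normMN M N g)"
proof (rule ccontr)
  assume notQ: "\<not> ?thesis"
  obtain C0 M0 N0 where C0: "C0 > 0" and C0b: "\<And>g. g \<in> schwartz \<Longrightarrow> norm (\<psi> g) \<le> C0 * normMN M0 N0 g"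
    using psi_bound[OF tp] by blast
  define W where "W t = C0 * ((1 + norm t) ^ M0 * 2 ^ M0 * (1 + real CARD('d) ^ M0))" for t :: "real^'d"
  have W0: "W t \<ge> 0" for t using C0 by (simp add: W_def)
  have Wb: "norm (\<psi> (transl t g)) \<le> W t * normMN M0 N0 g" if g: "g \<in> schwartz" for g t
  proof -
    have "norm (\<psi> (transl t g)) \<le> C0 * normMN M0 N0 (transl t g)" by (rule C0b[OF transl_schwartz[OF g]])
    also have "\<dots> \<le> C0 * ((1 + norm t) ^ M0 * 2 ^ M0 * (1 + real CARD('d) ^ M0) * normMN M0 N0 g)"
      by (intro mult_left_mono normMN_transl g) (use C0 in auto)
    finally show ?thesis by (simp add: W_def)
  qed
  define Bd where "Bd g = (SOME B. \<forall>t. norm (\<psi> (transl t g)) \<le> B)" for g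
  have Bd: "norm (\<psi> (transl t g)) \<le> Bd g" if g: "g \<in> schwartz" for g t
  proof -
    have "\<exists>B. \<forall>t. norm (\<psi> (transl t g)) \<le> B" using P1 g unfolding bounded_range_iff by blast
    from someI_ex[OF this] show ?thesis unfolding Bd_def by blast
  qed
  have pick: "\<exists>p. fst p \<in> schwartz \<and> normMN k k (fst p) \<le> e \<and> L \<le> norm (\<psi> (transl (snd p) (fst p)))"
    if e: "e > 0" for k e L
  proof -
    define C where "C = (\<bar>L\<bar> + 1) / e"
    have Cpos: "C > 0" using e by (simp add: C_def add_pos_nonneg)
    obtain g t where g: "g \<in> schwartz" and gt: "norm (\<psi> (transl t g)) > C * normMN k k g"
      using notQ Cpos by (meson not_le)
    define m where "m = normMN k k g"
    have m0: "m \<ge> 0" using normMN_nonneg[OF g] m_def by simp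
    have mpos: "m > 0"
    proof (rule ccontr)
      assume "\<not> m > 0"
      hence "m = 0" using m0 by simp
      hence "g = (\<lambda>_. 0)" using normMN_zero[OF g, of k k] m_def by simp
      hence "\<psi> (transl t g) = 0" by (simp add: transl_zero psi_zero[OF tp])
      thus False using gt m_def \<open>m = 0\<close> by simp
    qed
    define g' where "g' = (\<lambda>x. complex_of_real (e / m) * g x)"
    have g'S: "g' \<in> schwartz" unfolding g'_def by (rule schwartz_scale[OF g])
    have ng': "normMN k k g' = e" unfolding g'_def normMN_scale[OF g] using mpos e m_def by (simp add: norm_divide)
    have "norm (\<psi> (transl t g')) = (e / m) * norm (\<psi> (transl t g))"
      unfolding g'_def transl_scale psi_scale[OF tp transl_schwartz[OF g]]
      using mpos e by (simp add: norm_mult norm_divide)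
    also have "\<dots> \<ge> (e / m) * (C * m)"
      using gt m_def mpos e by (intro mult_left_mono) auto
    hence "norm (\<psi> (transl t g')) \<ge> e * C" using mpos calculation by simp
    moreover have "e * C = \<bar>L\<bar> + 1" using e by (simp add: C_def)
    ultimately have "L \<le> norm (\<psi> (transl t g'))" by linarith
    thus ?thesis using g'S ng' by (intro exI[of _ "(g', t)"]) auto
  qed
  define pk where "pk k s = (SOME p. fst p \<in> schwartz \<and> normMN k k (fst p) \<le> (1/2) ^ k / (1 + fst s) \<and>
       real k + snd s + 2 \<le> norm (\<psi> (transl (snd p) (fst p))))" for k :: nat and s :: "real \<times> real"
  have pk: "fst (pk k s) \<in> schwartz \<and> normMN k k (fst (pk k s)) \<le> (1/2) ^ k / (1 + fst s) \<and>
       real k + snd s + 2 \<le> norm (\<psi> (transl (snd (pk k s)) (fst (pk k s))))" if "fst s \<ge> 0" for k s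
  proof -
    have "(1/2::real) ^ k / (1 + fst s) > 0" using that by simp
    from pick[OF this, of k "real k + snd s + 2"]
    show ?thesis unfolding pk_def by (rule someI_ex)
  qed
  define st where "st = rec_nat (0, 0) (\<lambda>k s. (max (fst s) (W (snd (pk k s))), snd s + Bd (fst (pk k s))))"
  have st0: "st 0 = (0, 0)" by (simp add: st_def)
  have stS: "st (Suc k) = (max (fst (st k)) (W (snd (pk k (st k)))), snd (st k) + Bd (fst (pk k (st k))))" for k
    by (simp add: st_def)
  define A where "A k = fst (st k)" for k
  define Bs where "Bs k = snd (st k)" for k
  define g where "g k = fst (pk k (st k))" for k
  define t where "t k = snd (pk k (st k))" for k
  have A0: "A k \<ge> 0" for k by (induction k) (auto simp: A_def st0 stS)
  have Amono: "A j \<le> A k" if "j \<le> k" for j k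
    using that
  proof (induction k)
    case 0 then show ?case by simp
  next
    case (Suc k)
    show ?case
    proof (cases "j = Suc k")
      case False
      hence "A j \<le> A k" using Suc by simp
      also have "A k \<le> A (Suc k)" by (simp add: A_def stS)
      finally show ?thesis .
    qed simp
  qed
  have AW: "W (t j) \<le> A k" if "j < k" for j k
  proof -
    have "W (t j) \<le> A (Suc j)" by (simp add: A_def stS t_def)
    also have "\<dots> \<le> A k" using that by (intro Amono) simp
    finally show ?thesis .
  qed
  have gprop: "g k \<in> schwartz \<and> normMN k k (g k) \<le> (1/2) ^ k / (1 + A k) \<and>
       real k + Bs k + 2 \<le> norm (\<psi> (transl (t k) (g k)))" for k
    using pk[of "st k" k] A0[of k] unfolding A_def Bs_def g_def t_def by simp
  have gS: "g k \<in> schwartz" for k using gprop by blast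
  have Bs_eq: "Bs n = (\<Sum>k<n. Bd (g k))" for n
    by (induction n) (auto simp: Bs_def st0 stS g_def)
  define c where "c k = (1/2::real) ^ k / (1 + A k)" for k
  have c0: "c k \<ge> 0" for k using A0[of k] by (simp add: c_def)
  have cle: "c k \<le> (1/2) ^ k" for k
    using A0[of k] by (simp add: c_def divide_le_eq)
  have sc: "summable c"
    by (rule summable_comparison_test'[OF summable_geometric[of "1/2::real"], of 0]) (use c0 cle in auto)
  interpret S: ser g c
    by unfold_locales (use gprop c_def sc in auto)
  obtain BF where BF: "\<And>s. norm (\<psi> (transl s S.F)) \<le> BF"
    using P1 S.F_S unfolding bounded_range_iff by blast
  define n where "n = max (max M0 N0) (nat (ceiling BF))"
  have nM: "M0 \<le> Suc n" "N0 \<le> Suc n" by (auto simp: n_def)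
  have nB: "BF < real n + 1"
    by (simp add: n_def) linarith
  let ?s = "t n"
  let ?R = "\<lambda>x. S.F x - S.Sn (Suc n) x"
  have RS: "?R \<in> schwartz" by (rule schwartz_diff[OF S.F_S S.Sn_S])
  have decomp: "\<psi> (transl ?s S.F) = (\<Sum>k<n. \<psi> (transl ?s (g k))) + \<psi> (transl ?s (g n)) + \<psi> (transl ?s ?R)"
  proof -
    have "transl ?s S.F = (\<lambda>x. transl ?s (S.Sn (Suc n)) x + transl ?s ?R x)"
      by (simp add: transl_def fun_eq_iff)
    hence "\<psi> (transl ?s S.F) = \<psi> (transl ?s (S.Sn (Suc n))) + \<psi> (transl ?s ?R)"
      using psi_add[OF tp transl_schwartz[OF S.Sn_S] transl_schwartz[OF RS]] by simp
    moreover have "transl ?s (S.Sn (Suc n)) = (\<lambda>x. \<Sum>k<Suc n. transl ?s (g k) x)"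
      by (simp add: S.Sn_def[abs_def] transl_def)
    moreover have "\<psi> (\<lambda>x. \<Sum>k<Suc n. transl ?s (g k) x) = (\<Sum>k<Suc n. \<psi> (transl ?s (g k)))"
      by (rule psi_sum[OF tp transl_schwartz[OF gS]])
    ultimately show ?thesis by simp
  qed
  have b1: "norm (\<Sum>k<n. \<psi> (transl ?s (g k))) \<le> Bs n"
    unfolding Bs_eq by (rule order_trans[OF norm_sum sum_mono[OF Bd[OF gS]]])
  have b2: "real n + Bs n + 2 \<le> norm (\<psi> (transl ?s (g n)))" using gprop by blast
  have b3: "norm (\<psi> (transl ?s ?R)) \<le> 1"
  proof -
    let ?w = "W ?s"
    have "(\<Sum>j. c (j + Suc n)) \<le> (\<Sum>j. (1/2) ^ j * ((1/2) / (1 + ?w)))"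
    proof (rule suminf_le)
      show "summable (\<lambda>j. c (j + Suc n))" using S.summ_shift .
      show "summable (\<lambda>j. (1/2::real) ^ j * ((1/2) / (1 + ?w)))"
        by (intro summable_mult2 summable_geometric) simp
      fix j
      have aw: "?w \<le> A (j + Suc n)" by (rule AW) simp
      have "c (j + Suc n) = (1/2) ^ (j + Suc n) / (1 + A (j + Suc n))" by (simp add: c_def)
      also have "\<dots> \<le> (1/2) ^ (j + Suc n) / (1 + ?w)"
        using aw W0[of ?s] by (intro divide_left_mono) auto
      also have "(1/2::real) ^ (j + Suc n) \<le> (1/2) ^ (Suc j)"
        by (intro power_decreasing) auto
      hence "(1/2::real) ^ (j + Suc n) / (1 + ?w) \<le> (1/2) ^ (Suc j) / (1 + ?w)"
        using W0[of ?s] by (intro divide_right_mono) auto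
      also have "\<dots> = (1/2) ^ j * ((1/2) / (1 + ?w))" by simp
      finally show "c (j + Suc n) \<le> (1/2) ^ j * ((1/2) / (1 + ?w))" .
    qed
    also have "\<dots> = 1 / (1 + ?w)"
    proof -
      have "(\<lambda>j. (1/2::real) ^ j * ((1/2) / (1 + ?w))) sums (2 * ((1/2) / (1 + ?w)))"
        using sums_mult2[OF geometric_sums[of "1/2::real"], of "(1/2) / (1 + ?w)"] by simp
      hence "(\<Sum>j. (1/2::real) ^ j * ((1/2) / (1 + ?w))) = 2 * ((1/2) / (1 + ?w))" by (rule sums_unique[symmetric])
      also have "\<dots> = 1 / (1 + ?w)" using W0[of ?s] by (simp add: field_simps)
      finally show ?thesis .
    qed
    finally have tl: "(\<Sum>j. c (j + Suc n)) \<le> 1 / (1 + ?w)" .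
    have "norm (\<psi> (transl ?s ?R)) \<le> ?w * normMN M0 N0 ?R" by (rule Wb[OF RS])
    also have "\<dots> \<le> ?w * (1 / (1 + ?w))"
      using order_trans[OF S.F_tail[OF nM] tl] W0[of ?s] by (intro mult_left_mono) auto
    also have "\<dots> \<le> 1" using W0[of ?s] by (simp add: field_simps)
    finally show ?thesis .
  qed
  have eqg: "\<psi> (transl ?s (g n)) = (\<psi> (transl ?s S.F) - (\<Sum>k<n. \<psi> (transl ?s (g k)))) - \<psi> (transl ?s ?R)"
    using decomp by (simp add: algebra_simps)
  have t1: "norm ((\<psi> (transl ?s S.F) - (\<Sum>k<n. \<psi> (transl ?s (g k)))) - \<psi> (transl ?s ?R))
      \<le> norm (\<psi> (transl ?s S.F) - (\<Sum>k<n. \<psi> (transl ?s (g k)))) + norm (\<psi> (transl ?s ?R))"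
    by (rule norm_triangle_ineq4)
  have t2: "norm (\<psi> (transl ?s S.F) - (\<Sum>k<n. \<psi> (transl ?s (g k))))
      \<le> norm (\<psi> (transl ?s S.F)) + norm (\<Sum>k<n. \<psi> (transl ?s (g k)))"
    by (rule norm_triangle_ineq4)
  have "norm (\<psi> (transl ?s (g n))) \<le> norm (\<psi> (transl ?s S.F)) + norm (\<Sum>k<n. \<psi> (transl ?s (g k))) + norm (\<psi> (transl ?s ?R))"
    unfolding eqg using t1 t2 by linarith
  hence "real n + Bs n + 2 \<le> BF + Bs n + 1" using b1 b2 b3 BF[of ?s] by linarith
  thus False using nB by linarith
qed


theorem proposition2p2:
  fixes \<psi> :: "(real^'d::finite \<Rightarrow> complex) \<Rightarrow> complex"
  assumes "tempered \<psi>"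
  shows "((\<forall>f\<in>schwartz. bounded (range (dconv \<psi> f)))
           \<longleftrightarrow> (\<forall>f\<in>schwartz. bounded (range (dconv \<psi> f)) \<and>
                               uniformly_continuous_on UNIV (dconv \<psi> f)))
       \<and> ((\<forall>f\<in>schwartz. bounded (range (dconv \<psi> f)))
           \<longleftrightarrow> (\<exists>M N C. C > 0 \<and>
                  (\<forall>f\<in>schwartz. \<forall>t. norm (dconv \<psi> f t) \<le> C * normMN M N f)))
       \<and> ((\<forall>f\<in>schwartz. bounded (range (dconv \<psi> f)))
           \<longleftrightarrow> equicont_S (\<lambda>t. transl_distr t \<psi>) UNIV)"
proof -
  have tp: "tempered \<psi>" by (rule assms)
  let ?P1 = "\<forall>f\<in>schwartz. bounded (range (dconv \<psi> f))"
  let ?Q = "\<exists>M N C. C > 0 \<and> (\<forall>g\<in>schwartz. \<forall>t. norm (\<psi> (transl t g)) \<le> C * normMN M N g)"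
  have Q_P1': "\<forall>g\<in>schwartz. bounded (range (\<lambda>t. \<psi> (transl t g)))" if Q: ?Q
  proof
    fix g :: "'d testfun" assume g: "g \<in> schwartz"
    from Q obtain M N C where "C > 0" "\<forall>g\<in>schwartz. \<forall>t. norm (\<psi> (transl t g)) \<le> C * normMN M N g"
      by blast
    thus "bounded (range (\<lambda>t. \<psi> (transl t g)))" using g unfolding bounded_range_iff by blast
  qed
  have P1Q: "?P1 \<longleftrightarrow> ?Q"
    using P1_iff[OF tp] i_imp_iii[OF tp] Q_P1' by blast
  have QP3: "?Q \<longleftrightarrow> (\<exists>M N C. C > 0 \<and> (\<forall>f\<in>schwartz. \<forall>t. norm (dconv \<psi> f t) \<le> C * normMN M N f))"
    using P3_iff[OF tp] by blast
  have QP4: "?Q \<longleftrightarrow> equicont_S (\<lambda>t. transl_distr t \<psi>) UNIV"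
    using iii_imp_iv[OF tp] iv_imp_iii[OF tp] by blast
  have P2: "?P1 \<longleftrightarrow> (\<forall>f\<in>schwartz. bounded (range (dconv \<psi> f)) \<and>
                               uniformly_continuous_on UNIV (dconv \<psi> f))"
  proof
    assume p1: ?P1
    then obtain M N C where "C > 0" "\<forall>g\<in>schwartz. \<forall>t. norm (\<psi> (transl t g)) \<le> C * normMN M N g"
      using P1Q by blast
    hence "uniformly_continuous_on UNIV (dconv \<psi> f)" if "f \<in> schwartz" for f
      using iii_imp_ucont[OF tp] that by blast
    thus "\<forall>f\<in>schwartz. bounded (range (dconv \<psi> f)) \<and> uniformly_continuous_on UNIV (dconv \<psi> f)"
      using p1 by blast
  qed blast
  show ?thesis using P2 P1Q QP3 QP4 by blast
qed

end
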